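(* Let $T$ be a positive integer, $(\Omega,\mathcal{F},P)$ a probability space, $\mathbb{F}=(\mathcal{F}_t)_{t=0}^T$, $\mathbb{G}=(\mathcal{G}_t)_{t=0}^T$ filtrations with $\mathcal{G}_t\subseteq\mathcal{F}_t$, and $X^1,X^2,Y^1,Y^2$ real-valued $\mathbb{F}$-adapted processes indexed by $\{0,\dots,T\}$ with $E(\max_{0\le t\le T}|S_t|)<\infty$ for each $S\in\{X^1,X^2,Y^1,Y^2\}$, where $X^2,Y^2$ are moreover $\mathbb{G}$-adapted. Let $\Gamma$ be the game in which Player 1 chooses $\tau\in\mathcal{T}(\mathbb{F})$, Player 2 chooses $\nu\in\mathcal{T}(\mathbb{G})$, with expected utilities \[J_1(\tau,\nu)=E\left[X^1_\tau\mathbf{1}_{\{\tau\le\nu\}}+Y^1_\nu\mathbf{1}_{\{\tau>\nu\}}\right],\qquad J_2(\tau,\nu)=E\left[X^2_\nu\mathbf{1}_{\{\nu<\tau\}}+Y^2_\tau\mathbf{1}_{\{\tau\le\nu\}}\right].\] Assume $X^1_t\ge Y^1_t$ for every $0\le t\le T$, $P$-a.s. Let $\epsilon>0$ and let $\Gamma_\epsilon$ be identical to $\Gamma$ except that the expected utility of Player 1 is \[J_{1,\epsilon}(\tau,\nu)=E\left[(X^1_\tau+\epsilon)\mathbf{1}_{\{\tau\le\nu\}}+Y^1_\nu\mathbf{1}_{\{\tau>\nu\}}\right].\] If $(\tau_0,\nu_0)\in\mathcal{T}(\mathbb{F})\times\mathcal{T}(\mathbb{G})$ is a pure-strategy Nash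 equilibrium in $\Gamma_\epsilon$, then it is also a pure-strategy Nash equilibrium in $\Gamma$.
   Context: Time is discrete in $\{0,\dots,T\}$. For a filtration $\mathbb{H}$, $\mathcal{T}(\mathbb{H})$ is the set of $\mathbb{H}$-stopping times with values in $\{0,\dots,T\}$. A pair $(\tau^*,\nu^* )\in\mathcal{T}(\mathbb{F})\times\mathcal{T}(\mathbb{G})$ is a pure-strategy Nash equilibrium of a game with utilities $(U_1,U_2)$ if $U_1(\tau,\nu^* )\le U_1(\tau^*,\nu^* )$ for all $\tau\in\mathcal{T}(\mathbb{F})$ and $U_2(\tau^*,\nu)\le U_2(\tau^*,\nu^* )$ for all $\nu\in\mathcal{T}(\mathbb{G})$. *)

theory Defs
  imports "HOL-Probability.Probability"
begin

definition fin_filtration :: "'a measure \<Rightarrow> nat \<Rightarrow> (nat \<Rightarrow> 'a measure) \<Rightarrow> bool" where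
  "fin_filtration M T F \<longleftrightarrow>
     (\<forall>t\<le>T. subalgebra M (F t)) \<and>
     (\<forall>s t. s \<le> t \<longrightarrow> t \<le> T \<longrightarrow> sets (F s) \<subseteq> sets (F t))"

definition fin_adapted :: "nat \<Rightarrow> (nat \<Rightarrow> 'a measure) \<Rightarrow> (nat \<Rightarrow> 'a \<Rightarrow> real) \<Rightarrow> bool" where
  "fin_adapted T F X \<longleftrightarrow> (\<forall>t\<le>T. X t \<in> borel_measurable (F t))"

definition stopping_times :: "'a measure \<Rightarrow> nat \<Rightarrow> (nat \<Rightarrow> 'a measure) \<Rightarrow> ('a \<Rightarrow> nat) set" where
  "stopping_times M T F =
     {\<tau>. (\<forall>\<omega>\<in>space M. \<tau> \<omega> \<le> T) \<and>
          (\<forall>t\<le>T. {\<omega>\<in>space M. \<tau> \<omega> \<le> t} \<in> sets (F t))}"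

definition nash_eq :: "'s set \<Rightarrow> 'r set \<Rightarrow> ('s \<Rightarrow> 'r \<Rightarrow> real) \<Rightarrow> ('s \<Rightarrow> 'r \<Rightarrow> real)
    \<Rightarrow> 's \<Rightarrow> 'r \<Rightarrow> bool" where
  "nash_eq S1 S2 U1 U2 \<tau>s \<nu>s \<longleftrightarrow> \<tau>s \<in> S1 \<and> \<nu>s \<in> S2 \<and>
     (\<forall>\<tau>\<in>S1. U1 \<tau> \<nu>s \<le> U1 \<tau>s \<nu>s) \<and> (\<forall>\<nu>\<in>S2. U2 \<tau>s \<nu> \<le> U2 \<tau>s \<nu>s)"

end

theory Submission
  imports Defs
begin


lemma st_meas:
  assumes "fin_filtration M T F" "\<tau> \<in> stopping_times M T F"
  shows "\<tau> \<in> measurable M (count_space UNIV)"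
proof -
  have le: "{\<omega>\<in>space M. \<tau> \<omega> \<le> t} \<in> sets M" for t
  proof (cases "t \<le> T")
    case True
    then have "{\<omega>\<in>space M. \<tau> \<omega> \<le> t} \<in> sets (F t)" using assms(2) unfolding stopping_times_def by auto
    moreover have "subalgebra M (F t)" using assms(1) True unfolding fin_filtration_def by auto
    ultimately show ?thesis unfolding subalgebra_def by auto
  next
    case False
    then have "{\<omega>\<in>space M. \<tau> \<omega> \<le> t} = space M" using assms(2) unfolding stopping_times_def by auto
    then show ?thesis by simp
  qed
  have "\<tau> -` {a} \<inter> space M \<in> sets M" for a
  proof (cases a)
    case 0
    then have "\<tau> -` {a} \<inter> space M = {\<omega>\<in>space M. \<tau> \<omega> \<le> 0}" by auto
    moreover have "{\<omega>\<in>space M. \<tau> \<omega> \<le> 0} \<in> sets M" by (rule le)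
    ultimately show ?thesis by simp
  next
    case (Suc b)
    then have "\<tau> -` {a} \<inter> space M = {\<omega>\<in>space M. \<tau> \<omega> \<le> a} - {\<omega>\<in>space M. \<tau> \<omega> \<le> b}" by auto
    then show ?thesis using le by auto
  qed
  then show ?thesis by (simp add: measurable_count_space_eq2_countable)
qed

lemma meas2:
  assumes "\<tau> \<in> measurable M (count_space UNIV)" "\<nu> \<in> measurable M (count_space UNIV)"
    "\<And>i j. (\<lambda>\<omega>. h (i::nat) (j::nat) \<omega>) \<in> borel_measurable M"
  shows "(\<lambda>\<omega>. h (\<tau> \<omega>) (\<nu> \<omega>) \<omega>) \<in> borel_measurable M"
proof -
  have "(\<lambda>\<omega>. h i (\<nu> \<omega>) \<omega>) \<in> borel_measurable M" for i
    by (rule measurable_compose_countable[OF _ assms(2)]) (rule assms(3))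
  then show ?thesis by (rule measurable_compose_countable[OF _ assms(1)])
qed

lemma piece:
  fixes A :: "nat \<Rightarrow> 'a \<Rightarrow> real" and \<tau> \<nu> :: "'a \<Rightarrow> nat"
  assumes "\<tau> \<in> measurable M (count_space UNIV)" "\<nu> \<in> measurable M (count_space UNIV)"
    "\<forall>\<omega>\<in>space M. \<tau> \<omega> \<le> T"
    "\<forall>t\<le>T. A t \<in> borel_measurable M"
    "integrable M (\<lambda>\<omega>. MAX t\<in>{0..T}. \<bar>A t \<omega>\<bar>)"
  shows "integrable M (\<lambda>\<omega>. A (\<tau> \<omega>) \<omega> * indicator {\<omega>. P (\<tau> \<omega>) (\<nu> \<omega>)} \<omega>)"
proof (rule Bochner_Integration.integrable_bound[OF assms(5)])
  let ?h = "\<lambda>i j \<omega>. A (min i T) \<omega> * (if P i j then 1 else 0)"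
  have "(\<lambda>\<omega>. ?h (\<tau> \<omega>) (\<nu> \<omega>) \<omega>) \<in> borel_measurable M"
  proof (rule meas2[OF assms(1,2)])
    fix i j
    have "A (min i T) \<in> borel_measurable M" using assms(4) by simp
    then show "(\<lambda>\<omega>. ?h i j \<omega>) \<in> borel_measurable M" by measurable
  qed
  moreover have "\<And>\<omega>. \<omega> \<in> space M \<Longrightarrow> ?h (\<tau> \<omega>) (\<nu> \<omega>) \<omega> = A (\<tau> \<omega>) \<omega> * indicator {\<omega>. P (\<tau> \<omega>) (\<nu> \<omega>)} \<omega>"
    using assms(3) by (auto simp: min_absorb1 indicator_def)
  ultimately show "(\<lambda>\<omega>. A (\<tau> \<omega>) \<omega> * indicator {\<omega>. P (\<tau> \<omega>) (\<nu> \<omega>)} \<omega>) \<in> borel_measurable M"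
    by (simp cong: measurable_cong)
  show "AE x in M. norm (A (\<tau> x) x * indicator {\<omega>. P (\<tau> \<omega>) (\<nu> \<omega>)} x) \<le> norm (MAX t\<in>{0..T}. \<bar>A t x\<bar>)"
  proof (rule AE_I2)
    fix x assume "x \<in> space M"
    then have "\<tau> x \<in> {0..T}" using assms(3) by auto
    then have "\<bar>A (\<tau> x) x\<bar> \<le> (MAX t\<in>{0..T}. \<bar>A t x\<bar>)" by (intro Max_ge) auto
    then show "norm (A (\<tau> x) x * indicator {\<omega>. P (\<tau> \<omega>) (\<nu> \<omega>)} x) \<le> norm (MAX t\<in>{0..T}. \<bar>A t x\<bar>)"
      by (auto simp: indicator_def)
  qed
qed


theorem lemma1:
  fixes M :: "'a measure" and T :: nat and F G :: "nat \<Rightarrow> 'a measure"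
    and X1 X2 Y1 Y2 :: "nat \<Rightarrow> 'a \<Rightarrow> real" and \<epsilon> :: real
    and \<tau>0 \<nu>0 :: "'a \<Rightarrow> nat"
  assumes "0 < T"
    and "prob_space M"
    and "fin_filtration M T F" and "fin_filtration M T G"
    and "\<forall>t\<le>T. sets (G t) \<subseteq> sets (F t)"
    and "fin_adapted T F X1" and "fin_adapted T F X2"
    and "fin_adapted T F Y1" and "fin_adapted T F Y2"
    and "fin_adapted T G X2" and "fin_adapted T G Y2"
    and "\<forall>S\<in>{X1, X2, Y1, Y2}. integrable M (\<lambda>\<omega>. MAX t\<in>{0..T}. \<bar>S t \<omega>\<bar>)"
    and "\<forall>t\<le>T. AE \<omega> in M. Y1 t \<omega> \<le> X1 t \<omega>"
    and "0 < \<epsilon>"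
    and "nash_eq (stopping_times M T F) (stopping_times M T G)
           (\<lambda>\<tau> \<nu>. integral\<^sup>L M (\<lambda>\<omega>. (X1 (\<tau> \<omega>) \<omega> + \<epsilon>) * indicator {\<omega>. \<tau> \<omega> \<le> \<nu> \<omega>} \<omega>
                                  + Y1 (\<nu> \<omega>) \<omega> * indicator {\<omega>. \<tau> \<omega> > \<nu> \<omega>} \<omega>))
           (\<lambda>\<tau> \<nu>. integral\<^sup>L M (\<lambda>\<omega>. X2 (\<nu> \<omega>) \<omega> * indicator {\<omega>. \<nu> \<omega> < \<tau> \<omega>} \<omega>
                                  + Y2 (\<tau> \<omega>) \<omega> * indicator {\<omega>. \<tau> \<omega> \<le> \<nu> \<omega>} \<omega>))
           \<tau>0 \<nu>0"
  shows "nash_eq (stopping_times M T F) (stopping_times M T G)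
           (\<lambda>\<tau> \<nu>. integral\<^sup>L M (\<lambda>\<omega>. X1 (\<tau> \<omega>) \<omega> * indicator {\<omega>. \<tau> \<omega> \<le> \<nu> \<omega>} \<omega>
                                  + Y1 (\<nu> \<omega>) \<omega> * indicator {\<omega>. \<tau> \<omega> > \<nu> \<omega>} \<omega>))
           (\<lambda>\<tau> \<nu>. integral\<^sup>L M (\<lambda>\<omega>. X2 (\<nu> \<omega>) \<omega> * indicator {\<omega>. \<nu> \<omega> < \<tau> \<omega>} \<omega>
                                  + Y2 (\<tau> \<omega>) \<omega> * indicator {\<omega>. \<tau> \<omega> \<le> \<nu> \<omega>} \<omega>))
           \<tau>0 \<nu>0"
proof -
  interpret prob_space M by (rule assms(2))
  let ?SF = "stopping_times M T F" and ?SG = "stopping_times M T G"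
  define f where "f = (\<lambda>\<tau> \<omega>. X1 (\<tau> \<omega>) \<omega> * indicator {\<omega>. \<tau> \<omega> \<le> \<nu>0 \<omega>} \<omega>
                                  + Y1 (\<nu>0 \<omega>) \<omega> * indicator {\<omega>. \<tau> \<omega> > \<nu>0 \<omega>} \<omega>)"
  define fe where "fe = (\<lambda>\<tau> \<omega>. (X1 (\<tau> \<omega>) \<omega> + \<epsilon>) * indicator {\<omega>. \<tau> \<omega> \<le> \<nu>0 \<omega>} \<omega>
                                  + Y1 (\<nu>0 \<omega>) \<omega> * indicator {\<omega>. \<tau> \<omega> > \<nu>0 \<omega>} \<omega>)"
  have N: "\<tau>0 \<in> ?SF" "\<nu>0 \<in> ?SG" "\<forall>\<tau>\<in>?SF. integral\<^sup>L M (fe \<tau>) \<le> integral\<^sup>L M (fe \<tau>0)"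
    using assms(15) unfolding nash_eq_def fe_def by auto
  have X1m: "\<forall>t\<le>T. X1 t \<in> borel_measurable M" and Y1m: "\<forall>t\<le>T. Y1 t \<in> borel_measurable M"
    using assms(3,6,8) measurable_from_subalg unfolding fin_filtration_def fin_adapted_def by blast+
  have iX1: "integrable M (\<lambda>\<omega>. MAX t\<in>{0..T}. \<bar>X1 t \<omega>\<bar>)" and iY1: "integrable M (\<lambda>\<omega>. MAX t\<in>{0..T}. \<bar>Y1 t \<omega>\<bar>)"
    using assms(12) by auto
  have iE: "integrable M (\<lambda>\<omega>. MAX t\<in>{0..T}. \<bar>\<epsilon>\<bar>)" by simp
  have nu0m: "\<nu>0 \<in> measurable M (count_space UNIV)" using st_meas[OF assms(4) N(2)] .
  have nu0T: "\<forall>\<omega>\<in>space M. \<nu>0 \<omega> \<le> T" using N(2) unfolding stopping_times_def by auto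
  have feq: "fe \<tau> \<omega> = f \<tau> \<omega> + \<epsilon> * indicator {\<omega>. \<tau> \<omega> \<le> \<nu>0 \<omega>} \<omega>" for \<tau> \<omega>
    unfolding f_def fe_def by (simp add: algebra_simps)
  have integ: "integrable M (f \<tau>) \<and> integrable M (\<lambda>\<omega>. \<epsilon> * indicator {\<omega>. \<tau> \<omega> \<le> \<nu>0 \<omega>} \<omega>)" if "\<tau> \<in> ?SF" for \<tau>
  proof -
    have tm: "\<tau> \<in> measurable M (count_space UNIV)" using st_meas[OF assms(3) that] .
    have tT: "\<forall>\<omega>\<in>space M. \<tau> \<omega> \<le> T" using that unfolding stopping_times_def by auto
    have a: "integrable M (\<lambda>\<omega>. X1 (\<tau> \<omega>) \<omega> * indicator {\<omega>. \<tau> \<omega> \<le> \<nu>0 \<omega>} \<omega>)"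
      using piece[of \<tau> M \<nu>0 T X1 "\<lambda>a b. a \<le> b", OF tm nu0m tT X1m iX1] by simp
    have b: "integrable M (\<lambda>\<omega>. Y1 (\<nu>0 \<omega>) \<omega> * indicator {\<omega>. \<tau> \<omega> > \<nu>0 \<omega>} \<omega>)"
      using piece[of \<nu>0 M \<tau> T Y1 "\<lambda>a b. a < b", OF nu0m tm nu0T Y1m iY1] by simp
    have c: "integrable M (\<lambda>\<omega>. \<epsilon> * indicator {\<omega>. \<tau> \<omega> \<le> \<nu>0 \<omega>} \<omega>)"
      using piece[of \<tau> M \<nu>0 T "\<lambda>t \<omega>. \<epsilon>" "\<lambda>a b. a \<le> b", OF tm nu0m tT _ iE] by simp
    show ?thesis using a b c unfolding f_def by auto
  qed
  have intfe: "integral\<^sup>L M (fe \<tau>) = integral\<^sup>L M (f \<tau>) + integral\<^sup>L M (\<lambda>\<omega>. \<epsilon> * indicator {\<omega>. \<tau> \<omega> \<le> \<nu>0 \<omega>} \<omega>)"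
    if "\<tau> \<in> ?SF" for \<tau>
    using integ[OF that] unfolding feq by (simp add: Bochner_Integration.integral_add)
  have AEXY: "AE \<omega> in M. \<forall>t\<in>{..T}. Y1 t \<omega> \<le> X1 t \<omega>"
    by (rule AE_finite_allI) (use assms(13) in auto)
  have P1: "integral\<^sup>L M (f \<tau>) \<le> integral\<^sup>L M (f \<tau>0)" if tS: "\<tau> \<in> ?SF" for \<tau>
  proof -
    define \<sigma> where "\<sigma> = (\<lambda>\<omega>. min (\<tau> \<omega>) (\<nu>0 \<omega>))"
    have sS: "\<sigma> \<in> ?SF"
      unfolding stopping_times_def mem_Collect_eq
    proof (intro conjI allI impI ballI)
      fix \<omega> assume "\<omega> \<in> space M" then show "\<sigma> \<omega> \<le> T" using nu0T unfolding \<sigma>_def by auto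
    next
      fix t assume tT: "t \<le> T"
      have "{\<omega> \<in> space M. \<sigma> \<omega> \<le> t} = {\<omega> \<in> space M. \<tau> \<omega> \<le> t} \<union> {\<omega> \<in> space M. \<nu>0 \<omega> \<le> t}"
        unfolding \<sigma>_def by auto
      moreover have "{\<omega> \<in> space M. \<tau> \<omega> \<le> t} \<in> sets (F t)" using tS tT unfolding stopping_times_def by auto
      moreover have "{\<omega> \<in> space M. \<nu>0 \<omega> \<le> t} \<in> sets (F t)" using N(2) tT assms(5) unfolding stopping_times_def by auto
      ultimately show "{\<omega> \<in> space M. \<sigma> \<omega> \<le> t} \<in> sets (F t)" by auto
    qed
    have "integral\<^sup>L M (f \<tau>) \<le> integral\<^sup>L M (f \<sigma>)"
    proof (rule integral_mono_AE)
      show "integrable M (f \<tau>)" "integrable M (f \<sigma>)" using integ tS sS by auto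
      show "AE \<omega> in M. f \<tau> \<omega> \<le> f \<sigma> \<omega>"
        using AE_space AEXY
      proof eventually_elim
        case (elim \<omega>)
        then have "\<nu>0 \<omega> \<le> T" using nu0T by auto
        then show ?case using elim unfolding f_def \<sigma>_def by (auto simp: indicator_def)
      qed
    qed
    also have "\<dots> = integral\<^sup>L M (fe \<sigma>) - \<epsilon>"
    proof -
      have "fe \<sigma> = (\<lambda>\<omega>. f \<sigma> \<omega> + \<epsilon>)" unfolding feq \<sigma>_def by (auto simp: fun_eq_iff indicator_def)
      then have "integral\<^sup>L M (fe \<sigma>) = integral\<^sup>L M (f \<sigma>) + \<epsilon>"
        using integ[OF sS] by (simp add: Bochner_Integration.integral_add prob_space)
      then show ?thesis by simp
    qed
    also have "\<dots> \<le> integral\<^sup>L M (fe \<tau>0) - \<epsilon>" using N(3) sS by auto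
    also have "\<dots> \<le> integral\<^sup>L M (f \<tau>0)"
    proof -
      have "integral\<^sup>L M (\<lambda>\<omega>. \<epsilon> * indicator {\<omega>. \<tau>0 \<omega> \<le> \<nu>0 \<omega>} \<omega>) \<le> integral\<^sup>L M (\<lambda>\<omega>. \<epsilon>)"
        using integ[OF N(1)] assms(14) by (intro integral_mono) (auto simp: indicator_def)
      then show ?thesis using intfe[OF N(1)] by (simp add: prob_space)
    qed
    finally show ?thesis .
  qed
  show ?thesis
    using assms(15) P1 unfolding nash_eq_def f_def by auto
qed

end
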